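(* Let $\alpha,\beta,c_3,c_6,v$ be independent indeterminates and take $\mu_1=\mu_2=\mu_4=0$, $\mu_3=\alpha v+c_3$, $\mu_6=\beta v+c_6$. Then $s(t;\mu(v))$ is a power series in $\tau=t^3$, $s(t;\mu(v))=S(t^3,v)$, and $S(\tau,v)$ satisfies \[ \frac{\partial S}{\partial v}=(\alpha S^2+\beta S^3)\frac{\partial S}{\partial\tau}, \] with $S(\tau,0)=s_0(\tau)$, where $s_0(\tau)$ is the power series with $s_0(0)=0$ defined by $s_0=\tau+c_3s_0^2+c_6s_0^3$.
   Context: For parameters $\mu=(\mu_1,\mu_2,\mu_3,\mu_4,\mu_6)$, $s(t;\mu)$ denotes the unique formal power series in $t$ with $s(0;\mu)=0$ satisfying $s=t^3+\mu_1ts+\mu_2t^2s+\mu_3s^2+\mu_4ts^2+\mu_6s^3$ (the cubic $y^2+\mu_1xy+\mu_3y=x^3+\mu_2x^2+\mu_4x+\mu_6$ in Tate coordinates $t=-x/y$, $s=-1/y$). *)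

theory Defs
  imports "HOL-Computational_Algebra.Formal_Power_Series"
begin

definition tate_s :: "'a::comm_ring_1 \<Rightarrow> 'a \<Rightarrow> 'a \<Rightarrow> 'a \<Rightarrow> 'a \<Rightarrow> 'a fps" where
  "tate_s mu1 mu2 mu3 mu4 mu6 =
     (THE s. fps_nth s 0 = 0 \<and>
        s = fps_X ^ 3 + fps_const mu1 * fps_X * s + fps_const mu2 * fps_X ^ 2 * s
            + fps_const mu3 * s ^ 2 + fps_const mu4 * fps_X * s ^ 2 + fps_const mu6 * s ^ 3)"

definition s0_series :: "'a::comm_ring_1 \<Rightarrow> 'a \<Rightarrow> 'a fps" where
  "s0_series c3 c6 =
     (THE s. fps_nth s 0 = 0 \<and> s = fps_X + fps_const c3 * s ^ 2 + fps_const c6 * s ^ 3)"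

text \<open>Bivariate series S(tau,v) are modelled as 'a fps fps: the outer variable is tau,
the coefficients are power series in v.  Partial derivative in v, and specialization v = 0:\<close>
definition deriv_v :: "'a::comm_ring_1 fps fps \<Rightarrow> 'a fps fps" where
  "deriv_v S = Abs_fps (\<lambda>n. fps_deriv (fps_nth S n))"

definition at_v0 :: "'a::comm_ring_1 fps fps \<Rightarrow> 'a fps" where
  "at_v0 S = Abs_fps (\<lambda>n. fps_nth (fps_nth S n) 0)"

end

theory Submission
  imports Defs
begin

unbundle fps_syntax

lemma my_product_composition_lemma:
  fixes c d :: "'a::comm_ring_1 fps"
  assumes c0: "c$0 = 0"
    and d0: "d$0 = 0"
  shows "((a oo c) * (b oo d))$n =
    sum (\<lambda>(k,m). a$k * b$m * (c^k * d^m) $ n) {(k,m). k + m \<le> n}"  (is "?l = ?r")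
proof -
  let ?S = "{(k::nat, m::nat). k + m \<le> n}"
  have s: "?S \<subseteq> {0..n} \<times> {0..n}" by (simp add: subset_eq)
  have f: "finite {(k::nat, m::nat). k + m \<le> n}"
    by (auto intro: finite_subset[OF s])
  have "?r = (\<Sum>(k, m) \<in> {(k, m). k + m \<le> n}. \<Sum>j = 0..n. a $ k * b $ m * (c ^ k $ j * d ^ m $ (n - j)))"
    by (simp add: fps_mult_nth sum_distrib_left)
  also have "\<dots> = (\<Sum>i = 0..n. \<Sum>(k,m)\<in>{(k,m). k+m \<le> n}. a $ k * c ^ k $ i * b $ m * d ^ m $ (n-i))"
    unfolding sum.swap [where A = "{0..n}"] by (auto simp add: field_simps intro: sum.cong)
  also have "... = (\<Sum>i = 0..n.
                    \<Sum>q = 0..i. \<Sum>j = 0..n - i. a $ q * c ^ q $ i * (b $ j * d ^ j $ (n - i)))"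
    apply (rule sum.cong [OF refl])
    apply (simp add: sum.cartesian_product mult.assoc)
    apply (rule sum.mono_neutral_right[OF f], force)
    by (clarsimp; metis c0 d0 leI startsby_zero_power_prefix mult_zero_left mult_zero_right)
  also have "\<dots> = ?l"
    by (simp add: fps_mult_nth fps_compose_nth sum_product)
  finally show ?thesis by simp
qed

lemma my_compose_mult:
  fixes c :: "'a::comm_ring_1 fps"
  assumes c0: "c $ 0 = 0"
  shows "(a * b) oo c = (a oo c) * (b oo c)"
proof (clarsimp simp add: fps_eq_iff)
  fix n
  have "((a oo c) * (b oo c))$n = sum (\<lambda>s. sum (\<lambda>i. a$i * b$(s - i) * (c^s) $ n) {0..s}) {0..n}"
    unfolding my_product_composition_lemma[OF c0 c0] power_add[symmetric]
    unfolding sum_pair_less_iff[where a = "\<lambda>k. a$k" and b="\<lambda>m. b$m" and c="\<lambda>s. (c ^ s)$n" and n = n] ..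
  moreover have "(a * b oo c) $ n = (\<Sum>s = 0..n. \<Sum>i = 0..s. a $ i * b $ (s - i) * c ^ s $ n)"
    by (simp add: fps_compose_nth fps_mult_nth sum_distrib_right)
  ultimately show "(a * b oo c) $ n = ((a oo c) * (b oo c)) $ n" by simp
qed

lemma my_compose_cube:
  fixes c :: "'a::comm_ring_1 fps"
  assumes c0: "c $ 0 = 0"
  shows "a^3 oo c = (a oo c)^3"
  by (simp add: power3_eq_cube my_compose_mult[OF c0])

lemma fixed_zero:
  fixes d g :: "'a::comm_ring_1 fps"
  assumes "d = d * g" "g $ 0 = 0"
  shows "d = 0"
proof -
  have "\<forall>m<n. d $ m = 0" for n
  proof (induction n)
    case 0 then show ?case by simp
  next
    case (Suc n)
    have "d $ n = (d*g) $ n" using assms(1) by simp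
    also have "\<dots> = (\<Sum>i=0..n. d$i * g$(n - i))" by (rule fps_mult_nth)
    also have "\<dots> = 0"
    proof (rule sum.neutral, clarify)
      fix i assume "i \<in> {0..n}"
      then show "d$i * g$(n-i) = 0"
        using Suc.IH assms(2) by (cases "i = n") auto
    qed
    finally show ?case using Suc.IH less_Suc_eq by auto
  qed
  then show ?thesis by (auto simp: fps_eq_iff)
qed

lemma cubic_unique:
  fixes u v c :: "'a::comm_ring_1 fps"
  assumes "u$0 = 0" "v$0 = 0"
    "u = c + fps_const a * u^2 + fps_const b * u^3"
    "v = c + fps_const a * v^2 + fps_const b * v^3"
  shows "u = v"
proof -
  let ?g = "fps_const a * (u + v) + fps_const b * (u^2 + u*v + v^2)"
  have "u - v = (c + fps_const a * u^2 + fps_const b * u^3) - (c + fps_const a * v^2 + fps_const b * v^3)"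
    using assms(3,4) by simp
  also have "\<dots> = (u - v) * ?g"
    by (simp add: algebra_simps power2_eq_square power3_eq_cube)
  finally have "u - v = (u - v) * ?g" .
  moreover have "?g $ 0 = 0" using assms(1,2) by (simp add: power2_eq_square)
  ultimately have "u - v = 0" by (rule fixed_zero)
  then show ?thesis by simp
qed


lemma fps_fixpoint:
  fixes T :: "'a::comm_ring_1 fps \<Rightarrow> 'a fps"
  assumes T: "\<And>f g n. (\<forall>j<n. f$j = g$j) \<Longrightarrow> (\<forall>j<Suc n. T f $ j = T g $ j)"
  shows "\<exists>L. T L = L"
proof -
  define F where "F k = (T ^^ k) 0" for k
  have FS: "F (Suc k) = T (F k)" for k by (simp add: F_def)
  have C: "\<forall>j<k. F k $ j = F (Suc k) $ j" for k
  proof (induction k)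
    case 0 then show ?case by simp
  next
    case (Suc k)
    from T[OF Suc.IH] show ?case by (simp add: FS)
  qed
  have D: "\<forall>j<k. F m $ j = F k $ j" if "k \<le> m" for k m
    using that
  proof (induction m rule: dec_induct)
    case base then show ?case by simp
  next
    case (step m)
    then show ?case using C[of m] by auto
  qed
  define L where "L = Abs_fps (\<lambda>n. F (Suc n) $ n)"
  have "T L $ n = L $ n" for n
  proof -
    have ag: "\<forall>j<Suc n. L $ j = F (Suc n) $ j"
    proof (intro allI impI)
      fix j assume "j < Suc n"
      then have "Suc j \<le> Suc n" by simp
      from D[OF this] show "L $ j = F (Suc n) $ j" by (simp add: L_def)
    qed
    have "T L $ n = T (F (Suc n)) $ n" using T[OF ag] by simp
    also have "\<dots> = F (Suc (Suc n)) $ n" by (simp add: FS)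
    also have "\<dots> = F (Suc n) $ n" using D[of "Suc n" "Suc (Suc n)"] by simp
    finally show ?thesis by (simp add: L_def)
  qed
  then show ?thesis by (auto simp: fps_eq_iff)
qed

lemma agree_mult:
  fixes f1 g1 f2 g2 :: "'a::comm_ring_1 fps"
  assumes "f1$0 = 0" "g1$0 = 0" "f2$0 = 0" "g2$0 = 0"
    "\<forall>j<n. f1$j = g1$j" "\<forall>j<n. f2$j = g2$j"
  shows "\<forall>j<Suc n. (f1*f2)$j = (g1*g2)$j"
proof (intro allI impI)
  fix j assume j: "j < Suc n"
  show "(f1*f2)$j = (g1*g2)$j"
    unfolding fps_mult_nth
  proof (rule sum.cong[OF refl])
    fix i assume i: "i \<in> {0..j}"
    show "f1 $ i * f2 $ (j - i) = g1 $ i * g2 $ (j - i)"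
    proof (cases "i = 0 \<or> i = j")
      case True then show ?thesis using assms(1-4) by auto
    next
      case False then show ?thesis using assms(5,6) i j by auto
    qed
  qed
qed

lemma cubic_exists:
  fixes c :: "'a::comm_ring_1 fps"
  assumes c0: "c$0 = 0"
  shows "\<exists>u. u$0 = 0 \<and> u = c + fps_const a * u^2 + fps_const b * u^3"
proof -
  define h where "h s = s - fps_const (s$0)" for s :: "'a fps"
  define T where "T s = c + fps_const a * (h s * h s) + fps_const b * (h s * h s * h s)" for s
  have h0: "h s $ 0 = 0" for s by (simp add: h_def)
  have hag: "\<forall>j<n. h f $ j = h g $ j" if "\<forall>j<n. f$j = g$j" for f g n
    using that by (auto simp: h_def fps_const_def)
  have "\<exists>L. T L = L"
  proof (rule fps_fixpoint)
    fix f g :: "'a fps" and n assume ag: "\<forall>j<n. f$j = g$j"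
    have a1: "\<forall>j<Suc n. (h f * h f)$j = (h g * h g)$j"
      by (rule agree_mult) (use h0 hag[OF ag] in auto)
    have a1': "\<forall>j<n. (h f * h f)$j = (h g * h g)$j" using a1 by auto
    have a2: "\<forall>j<Suc n. (h f * h f * h f)$j = (h g * h g * h g)$j"
      by (rule agree_mult) (use h0 hag[OF ag] a1' in auto)
    show "\<forall>j<Suc n. T f $ j = T g $ j"
      using a1 a2 by (simp add: T_def)
  qed
  then obtain L where L: "T L = L" by blast
  have L0: "L$0 = 0"
  proof -
    have "L$0 = T L $ 0" using L by simp
    also have "\<dots> = 0" using c0 by (simp add: T_def h0)
    finally show ?thesis .
  qed
  then have "h L = L" by (simp add: h_def)
  with L have "L = c + fps_const a * L^2 + fps_const b * L^3"
    by (simp add: T_def power2_eq_square power3_eq_cube)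
  with L0 show ?thesis by blast
qed


lemma cubic_the:
  fixes c u :: "'a::comm_ring_1 fps"
  assumes "u$0 = 0" "u = c + fps_const a * u^2 + fps_const b * u^3"
  shows "(THE s. s$0 = 0 \<and> s = c + fps_const a * s^2 + fps_const b * s^3) = u"
  using assms by (intro the_equality) (auto intro: cubic_unique)

lemma at_v0_add: "at_v0 (F + G) = at_v0 F + at_v0 G"
  by (simp add: at_v0_def fps_eq_iff)

lemma at_v0_mult: "at_v0 (F * G) = at_v0 F * at_v0 G"
  by (simp add: at_v0_def fps_eq_iff fps_mult_nth fps_sum_nth)

lemma at_v0_X: "at_v0 (fps_X :: 'a::comm_ring_1 fps fps) = fps_X"
  by (simp add: at_v0_def fps_eq_iff fps_X_def)

lemma at_v0_const: "at_v0 (fps_const A) = fps_const (A $ 0)"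
  by (simp add: at_v0_def fps_eq_iff fps_const_def)

lemma deriv_v_add: "deriv_v (F + G) = deriv_v F + deriv_v G"
  by (simp add: deriv_v_def fps_eq_iff)

lemma deriv_v_mult: "deriv_v (F * G) = deriv_v F * G + F * deriv_v G"
  by (simp add: deriv_v_def fps_eq_iff fps_mult_nth fps_deriv_sum sum.distrib add_ac)

lemma deriv_v_X: "deriv_v (fps_X :: 'a::comm_ring_1 fps fps) = 0"
  by (simp add: deriv_v_def fps_eq_iff fps_X_def)

lemma deriv_v_const: "deriv_v (fps_const A) = fps_const (fps_deriv A)"
  by (simp add: deriv_v_def fps_eq_iff fps_const_def)


theorem mainTheorem8:
  fixes \<alpha> \<beta> c3 c6 :: "'a::comm_ring_1"
  defines "s \<equiv> tate_s 0 0 (fps_const \<alpha> * fps_X + fps_const c3) 0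
                         (fps_const \<beta> * fps_X + fps_const c6)"
  shows "\<exists>S :: 'a fps fps.
           s = fps_compose S (fps_X ^ 3) \<and>
           deriv_v S = (fps_const (fps_const \<alpha>) * S ^ 2 + fps_const (fps_const \<beta>) * S ^ 3)
                         * fps_deriv S \<and>
           at_v0 S = s0_series c3 c6"
proof -
  define A :: "'a fps" where "A = fps_const \<alpha> * fps_X + fps_const c3"
  define B :: "'a fps" where "B = fps_const \<beta> * fps_X + fps_const c6"
  obtain S :: "'a fps fps" where S0: "S$0 = 0"
    and SE: "S = fps_X + fps_const A * S^2 + fps_const B * S^3"
    using cubic_exists[of "fps_X :: 'a fps fps" A B] by auto
  define D where "D = S oo fps_X ^ 3"
  have X30: "(fps_X ^ 3 :: 'a fps fps) $ 0 = 0" by simp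
  have D0: "D $ 0 = 0" using S0 by (simp add: D_def)
  have "D = (fps_X + fps_const A * S^2 + fps_const B * S^3) oo fps_X ^ 3"
    unfolding D_def using SE by simp
  also have "\<dots> = fps_X ^ 3 + fps_const A * D^2 + fps_const B * D^3"
  proof -
    have m2: "S^2 oo fps_X ^ 3 = D^2"
      unfolding power2_eq_square D_def by (rule my_compose_mult[OF X30])
    have m3: "S^3 oo fps_X ^ 3 = D^3"
      unfolding D_def by (rule my_compose_cube[OF X30])
    show ?thesis
      by (simp add: fps_compose_add_distrib fps_const_mult_apply_left[symmetric] m2 m3)
  qed
  finally have DE: "D = fps_X ^ 3 + fps_const A * D^2 + fps_const B * D^3" .
  have sD: "s = D"
  proof -
    have "s = (THE s. s$0 = 0 \<and> s = fps_X ^ 3 + fps_const A * s^2 + fps_const B * s^3)"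
      by (simp add: s_def tate_s_def A_def B_def)
    also have "\<dots> = D" by (rule cubic_the[OF D0 DE])
    finally show ?thesis .
  qed
  have V0: "at_v0 S $ 0 = 0" using S0 by (simp add: at_v0_def)
  have "at_v0 S = at_v0 (fps_X + fps_const A * S^2 + fps_const B * S^3)"
    using SE by simp
  also have "\<dots> = fps_X + fps_const c3 * (at_v0 S)^2 + fps_const c6 * (at_v0 S)^3"
    by (simp add: at_v0_add at_v0_mult at_v0_X at_v0_const power2_eq_square power3_eq_cube A_def B_def)
  finally have VE: "at_v0 S = fps_X + fps_const c3 * (at_v0 S)^2 + fps_const c6 * (at_v0 S)^3" .
  have V: "at_v0 S = s0_series c3 c6"
    unfolding s0_series_def by (rule cubic_the[OF V0 VE, symmetric])
  define a :: "'a fps fps" where "a = fps_const (fps_const \<alpha>)"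
  define b :: "'a fps fps" where "b = fps_const (fps_const \<beta>)"
  define cA where "cA = fps_const A"
  define cB where "cB = fps_const B"
  define Sv where "Sv = deriv_v S"
  define Sd where "Sd = fps_deriv S"
  have dA: "deriv_v cA = a" by (simp add: cA_def a_def deriv_v_const A_def)
  have dB: "deriv_v cB = b" by (simp add: cB_def b_def deriv_v_const B_def)
  have SE': "S = fps_X + cA * (S*S) + cB * (S*S*S)"
    using SE by (simp add: cA_def cB_def power2_eq_square power3_eq_cube)
  have "Sv = deriv_v (fps_X + cA * (S*S) + cB * (S*S*S))"
    unfolding Sv_def using SE' by simp
  then have e1: "Sv = a * (S*S) + cA * (Sv*S + S*Sv) + (b * (S*S*S) + cB * ((Sv*S + S*Sv)*S + S*S*Sv))"
    by (simp add: deriv_v_add deriv_v_mult deriv_v_X dA dB Sv_def)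
  have "Sd = fps_deriv (fps_X + cA * (S*S) + cB * (S*S*S))"
    unfolding Sd_def using SE' by simp
  then have e2: "Sd = 1 + cA * (S*Sd + Sd*S) + cB * (S*S*Sd + (S*Sd + Sd*S)*S)"
    by (simp add: cA_def cB_def Sd_def)
  have "Sv = (a * S^2 + b * S^3) * Sd"
  proof -
    define F where "F = 1 - 2 * cA * S - 3 * cB * S * S"
    have f1: "Sv * F = a * S^2 + b * S^3"
      using e1 unfolding F_def by (simp add: algebra_simps power2_eq_square power3_eq_cube)
    have f2: "Sd * F = 1"
      using e2 unfolding F_def by (simp add: algebra_simps)
    have "Sv = Sv * (Sd * F)" using f2 by simp
    also have "\<dots> = (Sv * F) * Sd" by (simp add: algebra_simps)
    finally show ?thesis using f1 by simp
  qed
  then have PDE: "deriv_v S = (fps_const (fps_const \<alpha>) * S ^ 2 + fps_const (fps_const \<beta>) * S ^ 3)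
                         * fps_deriv S"
    by (simp add: Sv_def Sd_def a_def b_def)
  show ?thesis using sD PDE V unfolding D_def by blast
qed

end
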